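(* Let $n$ and $\ell$ be positive integers with $\ell$ odd such that $\Omega_\ell(n)$ is a powerful number. If $p\in P(n)$, then $\gcd(p(p-1),\ell)>1$.
   Context: A positive integer $a$ is called a powerful number if for every prime $p$, $p\mid a$ implies $p^2\mid a$. $\Omega_\ell(n)=\prod_{a=1}^{n}(a^\ell+1)$. For a positive integer $n$, $P(n)$ denotes the set of primes $p$ with $\frac{n+1}{2}<p\le n+1$. *)

theory Defs
  imports "HOL-Computational_Algebra.Primes"
begin

definition powerful :: "nat \<Rightarrow> bool" where
  "powerful a \<longleftrightarrow> a > 0 \<and> (\<forall>p. prime p \<longrightarrow> p dvd a \<longrightarrow> p^2 dvd a)"

definition Omega :: "nat \<Rightarrow> nat \<Rightarrow> nat" where
  "Omega l n = (\<Prod>a = 1..n. a ^ l + 1)"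

definition Pset :: "nat \<Rightarrow> nat set" where
  "Pset n = {p. prime p \<and> n + 1 < 2 * p \<and> p \<le> n + 1}"

end

theory Submission
  imports Defs "HOL-Number_Theory.Number_Theory"
begin

lemma powmod2:
  fixes p :: nat
  assumes "p \<ge> 1"
  shows "[(int p - 1)^k = (-1)^k * (1 - int k * int p)] (mod (int p)^2)"
proof (induction k)
  case 0 then show ?case by simp
next
  case (Suc k)
  have h1: "[(int p - 1)^Suc k = (-1)^k * (1 - int k * int p) * (int p - 1)] (mod (int p)^2)"
    using Suc cong_mult[OF Suc cong_refl[of "int p - 1"]] by (simp add: mult.commute)
  have h2: "(-1)^k * (1 - int k * int p) * (int p - 1) = (-1)^Suc k * (1 - int (Suc k) * int p) + (-1)^k * (- int k) * (int p)^2"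
    by (simp add: algebra_simps power2_eq_square)
  have h3: "[(-1)^Suc k * (1 - int (Suc k) * int p) + (-1)^k * (- int k) * (int p)^2 = (-1)^Suc k * (1 - int (Suc k) * int p)] (mod (int p)^2)"
    by (simp add: cong_iff_dvd_diff)
  show ?case using cong_trans[OF h1[unfolded h2] h3] .
qed

lemma root_unique:
  fixes p l a :: nat
  assumes "prime p" "l > 0" "coprime l (p - 1)" "p dvd a ^ l + 1"
  shows "[int a = -1] (mod int p)"
proof -
  have p2: "p \<ge> 2" using assms(1) prime_ge_2_nat by blast
  have nd: "\<not> p dvd a"
  proof
    assume "p dvd a"
    then have "p dvd a ^ l" using assms(2) by (cases l) auto
    with assms(4) have "p dvd 1" by (metis dvd_add_right_iff)
    with p2 show False by simp
  qed
  obtain u v where uv: "l * u = (p - 1) * v + gcd l (p - 1)"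
    using bezout_nat[of l "p - 1"] assms(2) by auto
  have uv1: "l * u = (p - 1) * v + 1" using uv assms(3) by simp
  have ferm: "[a ^ (p - 1) = 1] (mod p)" using fermat_theorem[OF assms(1) nd] .
  have ferm': "[int a ^ (p - 1) = 1] (mod int p)"
    using ferm by (metis cong_int_iff of_nat_1 of_nat_power)
  have al: "[int a ^ l = -1] (mod int p)"
  proof -
    have "int p dvd int a ^ l + 1" using assms(4) by (metis int_dvd_int_iff of_nat_1 of_nat_add of_nat_power)
    then show ?thesis by (simp add: cong_iff_dvd_diff)
  qed
  have e1: "int a ^ (l * u) = (int a ^ (p - 1)) ^ v * int a"
    using uv1 by (simp add: power_mult power_add)
  have e2: "[(int a ^ (p - 1)) ^ v * int a = int a] (mod int p)"
    using cong_mult[OF cong_pow[OF ferm', of v] cong_refl[of "int a"]] by simp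
  have e3: "[int a ^ (l * u) = (-1) ^ u] (mod int p)"
    using cong_pow[OF al, of u] by (simp add: power_mult)
  have au: "[int a = (-1)^u] (mod int p)"
    using cong_trans[OF cong_sym[OF e2[folded e1]] e3] .
  show ?thesis
  proof (cases "p = 2")
    case True
    have "[(-1::int)^u = -1] (mod 2)"
      by (cases "even u") (auto simp: cong_iff_dvd_diff)
    then show ?thesis using au True by (metis cong_trans of_nat_numeral)
  next
    case False
    then have "odd p" using assms(1) prime_odd_nat p2 by auto
    then have "even (p - 1)" by simp
    then have "odd (l * u)" using uv1 by simp
    then have "odd u" by simp
    then show ?thesis using au by simp
  qed
qed

theorem lemma2:
  fixes n l p :: nat
  assumes "n > 0" and "l > 0" and "odd l"
    and "powerful (Omega l n)"
    and "p \<in> Pset n"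
  shows "gcd (p * (p - 1)) l > 1"
proof (rule ccontr)
  assume H: "\<not> gcd (p * (p - 1)) l > 1"
  have pp: "prime p" "n + 1 < 2 * p" "p \<le> n + 1" using assms(5) by (auto simp: Pset_def)
  have p2: "p \<ge> 2" using pp(1) prime_ge_2_nat by blast
  have "gcd (p * (p - 1)) l \<noteq> 0" using assms(2) by simp
  then have g1: "coprime (p * (p - 1)) l" using H
    by (metis coprime_iff_gcd_eq_1 less_one linorder_neqE_nat)
  then have cpl: "coprime p l" and cp1: "coprime l (p - 1)"
    by (auto simp: coprime_commute)
  define f where "f = (\<lambda>a::nat. a ^ l + 1)"
  define R where "R = (\<Prod>a\<in>{1..n} - {p - 1}. f a)"
  have mem: "p - 1 \<in> {1..n}" using p2 pp by auto
  have om: "Omega l n = f (p - 1) * R"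
    unfolding Omega_def R_def f_def using prod.remove[OF _ mem, of "\<lambda>a. a ^ l + 1"] by simp
  have key: "[(int p - 1)^l + 1 = int l * int p] (mod (int p)^2)"
  proof -
    have "[(int p - 1)^l = (-1)^l * (1 - int l * int p)] (mod (int p)^2)"
      using powmod2 p2 by auto
    then have "[(int p - 1)^l = int l * int p - 1] (mod (int p)^2)"
      using assms(3) by simp
    then show ?thesis using cong_add[OF _ cong_refl[of 1]] by fastforce
  qed
  have fint: "int (f (p - 1)) = (int p - 1)^l + 1"
    using p2 by (simp add: f_def of_nat_diff)
  have pf: "p dvd f (p - 1)"
  proof -
    have "[(int p - 1)^l + 1 = int l * int p] (mod int p)"
      using key cong_dvd_modulus[of _ _ "(int p)^2" "int p"] by (simp add: power2_eq_square)
    then have "int p dvd (int p - 1)^l + 1"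
      by (simp add: cong_dvd_iff)
    then show ?thesis using fint by (metis int_dvd_int_iff)
  qed
  have pR: "\<not> p dvd R"
  proof
    assume "p dvd R"
    then have "\<exists>a\<in>{1..n} - {p - 1}. p dvd f a"
      unfolding R_def using prime_dvd_prod_iff[OF _ pp(1), of "{1..n} - {p - 1}" f] by simp
    then obtain a where a: "a \<in> {1..n} - {p - 1}" "p dvd f a" by blast
    have "[int a = -1] (mod int p)"
      using root_unique[OF pp(1) assms(2) cp1] a(2) by (simp add: f_def)
    then have "int p dvd int a + 1" by (simp add: cong_iff_dvd_diff)
    then have "p dvd a + 1" by (metis int_dvd_int_iff of_nat_1 of_nat_add)
    then obtain k where k: "a + 1 = p * k" by blast
    have "k \<ge> 1" using k by (cases k) auto
    moreover have "p * k \<le> n + 1" using k a(1) by auto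
    then have "p * k < p * 2" using pp(2) by linarith
    then have "k < 2" by simp
    ultimately have "k = 1" by simp
    with k a(1) show False by auto
  qed
  have "p dvd Omega l n" using om pf by simp
  then have "p^2 dvd f (p - 1) * R" using assms(4) pp(1) om unfolding powerful_def by auto
  moreover have "coprime (p^2) R" using pR pp(1) by (simp add: prime_imp_coprime)
  ultimately have "p^2 dvd f (p - 1)" using coprime_dvd_mult_left_iff by blast
  then have "(int p)^2 dvd (int p - 1)^l + 1" using fint by (metis int_dvd_int_iff of_nat_power)
  then have "(int p)^2 dvd int l * int p" using key by (simp add: cong_dvd_iff)
  then have "int p dvd int l" using p2 by (simp add: power2_eq_square mult.commute)
  then have "p dvd l" by simp
  then have "is_unit p" using cpl coprime_common_divisor dvd_refl by blast
  with p2 show False by simp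
qed

end
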